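(* Let $\mu$ be a probability measure on $\{0,1\}^{\mathbb{N}}$ with negatively correlated coordinates, i.e. $X\sim\mu$ satisfies $\mathbb{E}[X_iX_j]\le \mathbb{E}[X_i]\mathbb{E}[X_j]$ for all $i\neq j$ in $\mathbb{N}$, and let $\tilde\mu$ be its product version. Then $$\Delta_n(\mu)\ \ge\ \tfrac14\,\Delta_n(\tilde\mu)\qquad\text{for all } n\ge 1.$$
   Context: For a probability measure $\mu$ on $\{0,1\}^{\mathbb{N}}$ and $n\ge1$, let $X^{(1)},\dots,X^{(n)}$ be i.i.d. samples from $\mu$ and define $\Delta_n(\mu):=\mathbb{E}\sup_{j\in\mathbb{N}}\left|\frac1n\sum_{i=1}^n X^{(i)}_j-\mathbb{E}_{X\sim\mu}[X_j]\right|$. The product version $\tilde\mu$ of $\mu$ is the product measure on $\{0,1\}^{\mathbb{N}}$ whose one-dimensional marginals agree with those of $\mu$ (i.e. the coordinates are independent with the same marginal laws as under $\mu$). *)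

theory Defs
  imports "HOL-Probability.Probability"
begin

text \<open>The cube \{0,1\}^N, coordinates encoded as booleans (True = 1).\<close>
definition cube :: "(nat \<Rightarrow> bool) measure" where
  "cube = Pi\<^sub>M UNIV (\<lambda>_::nat. count_space (UNIV :: bool set))"

definition coord_mean :: "(nat \<Rightarrow> bool) measure \<Rightarrow> nat \<Rightarrow> real" where
  "coord_mean \<mu> j = (\<integral>x. of_bool (x j) \<partial>\<mu>)"

definition Delta :: "nat \<Rightarrow> (nat \<Rightarrow> bool) measure \<Rightarrow> real" where
  "Delta n \<mu> = (\<integral>xs. (SUP j. \<bar>(\<Sum>i<n. of_bool (xs i j)) / real n - coord_mean \<mu> j\<bar>)
                  \<partial>(Pi\<^sub>M {..<n} (\<lambda>_. \<mu>)))"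

definition product_version :: "(nat \<Rightarrow> bool) measure \<Rightarrow> (nat \<Rightarrow> bool) measure" where
  "product_version \<mu> = Pi\<^sub>M UNIV (\<lambda>j. distr \<mu> (count_space UNIV) (\<lambda>x. x j))"

definition neg_correlated :: "(nat \<Rightarrow> bool) measure \<Rightarrow> bool" where
  "neg_correlated \<mu> \<longleftrightarrow> (\<forall>i j. i \<noteq> j \<longrightarrow>
     (\<integral>x. of_bool (x i) * of_bool (x j) \<partial>\<mu>) \<le> coord_mean \<mu> i * coord_mean \<mu> j)"

end

theory Submission
  imports Defs
begin

declare sum_of_bool_eq[simp del]

lemma meas_count_fin:
  fixes \<nu> :: "(bool \<times> bool) measure"
  assumes "sets \<nu> = sets (count_space UNIV)"
  shows "(f :: bool \<times> bool \<Rightarrow> real) \<in> borel_measurable \<nu>"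
  using assms by (simp add: measurable_cong_sets[OF assms refl])

lemma integrable_fin:
  fixes \<nu> :: "(bool \<times> bool) measure"
  assumes "prob_space \<nu>" "sets \<nu> = sets (count_space UNIV)"
  shows "integrable \<nu> (f :: bool \<times> bool \<Rightarrow> real)"
proof -
  interpret prob_space \<nu> by fact
  have "\<And>z. norm (f z) \<le> (\<Sum>w\<in>UNIV. \<bar>f w\<bar>)"
    by (simp, rule member_le_sum) auto
  then show ?thesis
    using meas_count_fin[OF assms(2)]
    by (intro integrable_const_bound[where B="\<Sum>w\<in>UNIV. \<bar>f w\<bar>"]) auto
qed

lemma pair_lemma:
  fixes \<nu> :: "(bool \<times> bool) measure" and u v :: "bool \<Rightarrow> real"
  assumes P: "prob_space \<nu>" and S: "sets \<nu> = sets (count_space UNIV)"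
    and cov: "(\<integral>z. (of_bool (fst z) * of_bool (snd z) :: real) \<partial>\<nu>) \<le> (\<integral>z. of_bool (fst z) \<partial>\<nu>) * (\<integral>z. of_bool (snd z) \<partial>\<nu>)"
    and uv: "0 \<le> (u True - u False) * (v True - v False)"
  shows "(\<integral>z. u (fst z) * v (snd z) \<partial>\<nu>) \<le> (\<integral>z. u (fst z) \<partial>\<nu>) * (\<integral>z. v (snd z) \<partial>\<nu>)"
proof -
  interpret prob_space \<nu> by fact
  note I = integrable_fin[OF P S]
  define ea where "ea = (\<integral>z. (of_bool (fst z)::real) \<partial>\<nu>)"
  define eb where "eb = (\<integral>z. (of_bool (snd z)::real) \<partial>\<nu>)"
  define ec where "ec = (\<integral>z. (of_bool (fst z) * of_bool (snd z)::real) \<partial>\<nu>)"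
  define du where "du = u True - u False"
  define dv where "dv = v True - v False"
  have eu: "\<And>x. u x = u False + du * of_bool x" by (auto simp: du_def)
  have ev: "\<And>x. v x = v False + dv * of_bool x" by (auto simp: dv_def)
  have e1: "(\<lambda>z. u (fst z) * v (snd z)) = (\<lambda>z. u False * v False + u False * dv * of_bool (snd z)
     + du * v False * of_bool (fst z) + du * dv * (of_bool (fst z) * of_bool (snd z)))"
    by (rule ext) (subst eu, subst ev, simp add: algebra_simps)
  have L: "(\<integral>z. u (fst z) * v (snd z) \<partial>\<nu>) = u False * v False + u False * dv * eb + du * v False * ea + du * dv * ec"
    unfolding e1 ea_def eb_def ec_def by (simp add: I prob_space)
  have R1: "(\<integral>z. u (fst z) \<partial>\<nu>) = u False + du * ea"
    by (subst eu) (simp add: I ea_def prob_space)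
  have R2: "(\<integral>z. v (snd z) \<partial>\<nu>) = v False + dv * eb"
    by (subst ev) (simp add: I eb_def prob_space)
  have "du * dv * ec \<le> du * dv * (ea * eb)"
    using cov uv by (intro mult_left_mono) (auto simp: ea_def eb_def ec_def du_def dv_def)
  then show ?thesis unfolding L R1 R2 by (simp add: algebra_simps)
qed


lemma meas_sum_mono:
  fixes \<nu> :: "(bool \<times> bool) measure" and f :: "bool \<times> bool \<Rightarrow> real" and h :: "real \<Rightarrow> real"
  assumes S: "sets \<nu> = sets (count_space UNIV)" and h: "mono h \<or> antimono h"
  shows "(\<lambda>\<omega>. h (\<Sum>k\<in>I. f (\<omega> k))) \<in> borel_measurable (PiM I (\<lambda>_. \<nu>))"
proof -
  have "(\<lambda>\<omega>. (\<Sum>k\<in>I. f (\<omega> k))) \<in> borel_measurable (PiM I (\<lambda>_. \<nu>))"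
  proof (intro borel_measurable_sum)
    fix k assume "k \<in> I"
    then show "(\<lambda>\<omega>. f (\<omega> k)) \<in> borel_measurable (PiM I (\<lambda>_. \<nu>))"
      using measurable_compose[OF measurable_component_singleton[of k I "\<lambda>_. \<nu>"] meas_count_fin[OF S, of f]] by blast
  qed
  moreover have "h \<in> borel_measurable borel"
  proof (cases "mono h")
    case True then show ?thesis by (rule borel_measurable_mono)
  next
    case False
    then have "mono (\<lambda>x. - h x)" using h by (auto simp: mono_def antimono_def)
    then have "(\<lambda>x. - h x) \<in> borel_measurable borel" by (rule borel_measurable_mono)
    then have "(\<lambda>x. - (- h x)) \<in> borel_measurable borel" by (rule borel_measurable_uminus)
    then show ?thesis by simp
  qed
  ultimately show ?thesis using measurable_compose by blast
qed

lemma NA_lemma: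
  fixes \<nu> :: "(bool \<times> bool) measure" and h g :: "real \<Rightarrow> real"
  assumes P: "prob_space \<nu>" and S: "sets \<nu> = sets (count_space UNIV)"
    and cov: "(\<integral>z. (of_bool (fst z) * of_bool (snd z) :: real) \<partial>\<nu>) \<le> (\<integral>z. of_bool (fst z) \<partial>\<nu>) * (\<integral>z. of_bool (snd z) \<partial>\<nu>)"
    and fin: "finite I"
  shows "(mono h \<and> mono g) \<or> (antimono h \<and> antimono g) \<Longrightarrow> (\<And>x. 0 \<le> h x) \<Longrightarrow> (\<And>x. 0 \<le> g x) \<Longrightarrow>
    (\<integral>\<^sup>+\<omega>. ennreal (h (\<Sum>k\<in>I. of_bool (fst (\<omega> k))) * g (\<Sum>k\<in>I. of_bool (snd (\<omega> k)))) \<partial>PiM I (\<lambda>_. \<nu>))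
    \<le> (\<integral>\<^sup>+\<omega>. ennreal (h (\<Sum>k\<in>I. of_bool (fst (\<omega> k)))) \<partial>PiM I (\<lambda>_. \<nu>)) *
       (\<integral>\<^sup>+\<omega>. ennreal (g (\<Sum>k\<in>I. of_bool (snd (\<omega> k)))) \<partial>PiM I (\<lambda>_. \<nu>))"
  using fin
proof (induction I arbitrary: h g rule: finite_induct)
  case empty
  interpret Q: prob_space "PiM {} (\<lambda>_. \<nu>)" by (rule prob_space_PiM) (use P in auto)
  show ?case using empty
    by (simp add: Q.emeasure_space_1 ennreal_mult')
next
  case (insert i I h g)
  interpret prob_space \<nu> by fact
  interpret PS: product_sigma_finite "\<lambda>_. \<nu>"
    by (simp add: product_sigma_finite_def prob_space_imp_sigma_finite P)
  note I = integrable_fin[OF P S]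
  define a where "a x = (\<Sum>k\<in>I. of_bool (fst (x k)) :: real)" for x :: "'a \<Rightarrow> bool \<times> bool"
  define b where "b x = (\<Sum>k\<in>I. of_bool (snd (x k)) :: real)" for x :: "'a \<Rightarrow> bool \<times> bool"
  define H where "H t = (\<integral>y. h (of_bool (fst y) + t) \<partial>\<nu>)" for t
  define G where "G t = (\<integral>y. g (of_bool (snd y) + t) \<partial>\<nu>)" for t
  have sumfst: "(\<Sum>k\<in>insert i I. of_bool (fst ((x(i:=y)) k)) :: real) = of_bool (fst y) + a x" for x y
    proof -
    have "(\<Sum>k\<in>I. of_bool (fst ((x(i:=y)) k)) :: real) = (\<Sum>k\<in>I. of_bool (fst (x k)))"
      by (rule sum.cong) (use insert(2) in auto)
    then show ?thesis unfolding a_def using insert(1,2) by (subst sum.insert) auto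
  qed
  have sumsnd: "(\<Sum>k\<in>insert i I. of_bool (snd ((x(i:=y)) k)) :: real) = of_bool (snd y) + b x" for x y
    proof -
    have "(\<Sum>k\<in>I. of_bool (snd ((x(i:=y)) k)) :: real) = (\<Sum>k\<in>I. of_bool (snd (x k)))"
      by (rule sum.cong) (use insert(2) in auto)
    then show ?thesis unfolding b_def using insert(1,2) by (subst sum.insert) auto
  qed
  have HG: "(mono H \<and> mono G) \<or> (antimono H \<and> antimono G)"
    using insert(4)
  proof
    assume m: "mono h \<and> mono g"
    have "mono H" unfolding H_def
    proof (rule monoI)
      fix x y :: real assume "x \<le> y"
      show "(\<integral>z. h (of_bool (fst z) + x) \<partial>\<nu>) \<le> (\<integral>z. h (of_bool (fst z) + y) \<partial>\<nu>)"
        apply (rule integral_mono)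
          apply (rule I)
         apply (rule I)
        apply (rule monoD[OF conjunct1[OF m]])
        apply (simp add: \<open>x \<le> y\<close>)
        done
    qed
    moreover have "mono G" unfolding G_def
    proof (rule monoI)
      fix x y :: real assume "x \<le> y"
      show "(\<integral>z. g (of_bool (snd z) + x) \<partial>\<nu>) \<le> (\<integral>z. g (of_bool (snd z) + y) \<partial>\<nu>)"
        apply (rule integral_mono)
          apply (rule I)
         apply (rule I)
        apply (rule monoD[OF conjunct2[OF m]])
        apply (simp add: \<open>x \<le> y\<close>)
        done
    qed
    ultimately show ?thesis by blast
  next
    assume m: "antimono h \<and> antimono g"
    have "antimono H" unfolding H_def
    proof (rule antimonoI)
      fix x y :: real assume "x \<le> y"
      show "(\<integral>z. h (of_bool (fst z) + y) \<partial>\<nu>) \<le> (\<integral>z. h (of_bool (fst z) + x) \<partial>\<nu>)"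
        apply (rule integral_mono)
          apply (rule I)
         apply (rule I)
        apply (rule antimonoD[OF conjunct1[OF m]])
        apply (simp add: \<open>x \<le> y\<close>)
        done
    qed
    moreover have "antimono G" unfolding G_def
    proof (rule antimonoI)
      fix x y :: real assume "x \<le> y"
      show "(\<integral>z. g (of_bool (snd z) + y) \<partial>\<nu>) \<le> (\<integral>z. g (of_bool (snd z) + x) \<partial>\<nu>)"
        apply (rule integral_mono)
          apply (rule I)
         apply (rule I)
        apply (rule antimonoD[OF conjunct2[OF m]])
        apply (simp add: \<open>x \<le> y\<close>)
        done
    qed
    ultimately show ?thesis by blast
  qed
  have Hnn: "0 \<le> H t" for t unfolding H_def by (intro Bochner_Integration.integral_nonneg) (use insert(5) in auto)
  have Gnn: "0 \<le> G t" for t unfolding G_def by (intro Bochner_Integration.integral_nonneg) (use insert(6) in auto)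
  have mh: "(\<lambda>\<omega>. h (\<Sum>k\<in>insert i I. of_bool (fst (\<omega> k)))) \<in> borel_measurable (PiM (insert i I) (\<lambda>_. \<nu>))"
    by (rule meas_sum_mono[OF S]) (use insert(4) in blast)
  have mg: "(\<lambda>\<omega>. g (\<Sum>k\<in>insert i I. of_bool (snd (\<omega> k)))) \<in> borel_measurable (PiM (insert i I) (\<lambda>_. \<nu>))"
    by (rule meas_sum_mono[OF S]) (use insert(4) in blast)
  have mh': "(\<lambda>\<omega>. ennreal (h (\<Sum>k\<in>insert i I. of_bool (fst (\<omega> k))))) \<in> borel_measurable (PiM (insert i I) (\<lambda>_. \<nu>))"
    using mh by measurable
  have mg': "(\<lambda>\<omega>. ennreal (g (\<Sum>k\<in>insert i I. of_bool (snd (\<omega> k))))) \<in> borel_measurable (PiM (insert i I) (\<lambda>_. \<nu>))"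
    using mg by measurable
  have mhg': "(\<lambda>\<omega>. ennreal (h (\<Sum>k\<in>insert i I. of_bool (fst (\<omega> k))) * g (\<Sum>k\<in>insert i I. of_bool (snd (\<omega> k))))) \<in> borel_measurable (PiM (insert i I) (\<lambda>_. \<nu>))"
    using mh mg by measurable
  have LH: "(\<integral>\<^sup>+\<omega>. ennreal (h (\<Sum>k\<in>insert i I. of_bool (fst (\<omega> k)))) \<partial>PiM (insert i I) (\<lambda>_. \<nu>))
      = (\<integral>\<^sup>+x. ennreal (H (a x)) \<partial>PiM I (\<lambda>_. \<nu>))"
  proof -
    have "(\<integral>\<^sup>+\<omega>. ennreal (h (\<Sum>k\<in>insert i I. of_bool (fst (\<omega> k)))) \<partial>PiM (insert i I) (\<lambda>_. \<nu>))
      = (\<integral>\<^sup>+x. (\<integral>\<^sup>+y. ennreal (h (of_bool (fst y) + a x)) \<partial>\<nu>) \<partial>PiM I (\<lambda>_. \<nu>))"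
      by (subst PS.product_nn_integral_insert[OF insert(1,2)]) (simp_all only: sumfst mh')
    also have "\<dots> = (\<integral>\<^sup>+x. ennreal (H (a x)) \<partial>PiM I (\<lambda>_. \<nu>))"
      unfolding H_def
      by (intro nn_integral_cong nn_integral_eq_integral I AE_I2) (use insert(5) in auto)
    finally show ?thesis .
  qed
  have LG: "(\<integral>\<^sup>+\<omega>. ennreal (g (\<Sum>k\<in>insert i I. of_bool (snd (\<omega> k)))) \<partial>PiM (insert i I) (\<lambda>_. \<nu>))
      = (\<integral>\<^sup>+x. ennreal (G (b x)) \<partial>PiM I (\<lambda>_. \<nu>))"
  proof -
    have "(\<integral>\<^sup>+\<omega>. ennreal (g (\<Sum>k\<in>insert i I. of_bool (snd (\<omega> k)))) \<partial>PiM (insert i I) (\<lambda>_. \<nu>))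
      = (\<integral>\<^sup>+x. (\<integral>\<^sup>+y. ennreal (g (of_bool (snd y) + b x)) \<partial>\<nu>) \<partial>PiM I (\<lambda>_. \<nu>))"
      by (subst PS.product_nn_integral_insert[OF insert(1,2)]) (simp_all only: sumsnd mg')
    also have "\<dots> = (\<integral>\<^sup>+x. ennreal (G (b x)) \<partial>PiM I (\<lambda>_. \<nu>))"
      unfolding G_def
      by (intro nn_integral_cong nn_integral_eq_integral I AE_I2) (use insert(6) in auto)
    finally show ?thesis .
  qed
  have "(\<integral>\<^sup>+\<omega>. ennreal (h (\<Sum>k\<in>insert i I. of_bool (fst (\<omega> k))) * g (\<Sum>k\<in>insert i I. of_bool (snd (\<omega> k)))) \<partial>PiM (insert i I) (\<lambda>_. \<nu>))
     = (\<integral>\<^sup>+x. (\<integral>\<^sup>+y. ennreal (h (of_bool (fst y) + a x) * g (of_bool (snd y) + b x)) \<partial>\<nu>) \<partial>PiM I (\<lambda>_. \<nu>))"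
    by (subst PS.product_nn_integral_insert[OF insert(1,2)]) (simp_all only: sumfst sumsnd mhg')
  also have "\<dots> \<le> (\<integral>\<^sup>+x. ennreal (H (a x) * G (b x)) \<partial>PiM I (\<lambda>_. \<nu>))"
  proof (intro nn_integral_mono)
    fix x
    have "(\<integral>\<^sup>+y. ennreal (h (of_bool (fst y) + a x) * g (of_bool (snd y) + b x)) \<partial>\<nu>)
        = ennreal (\<integral>y. h (of_bool (fst y) + a x) * g (of_bool (snd y) + b x) \<partial>\<nu>)"
      by (intro nn_integral_eq_integral I AE_I2) (use insert(5,6) in auto)
    also have "\<dots> \<le> ennreal (H (a x) * G (b x))"
      unfolding H_def G_def
    proof (intro ennreal_leI pair_lemma[OF P S cov, of "\<lambda>c. h (of_bool c + a x)" "\<lambda>c. g (of_bool c + b x)", simplified])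
      have le: "a x \<le> 1 + a x" "b x \<le> 1 + b x" by simp_all
      show "0 \<le> (h (1 + a x) - h (a x)) * (g (1 + b x) - g (b x))"
        using insert(4)
      proof
        assume m: "mono h \<and> mono g"
        then have "h (a x) \<le> h (1 + a x)" "g (b x) \<le> g (1 + b x)"
          using le monoD[OF conjunct1[OF m]] monoD[OF conjunct2[OF m]] by blast+
        then show ?thesis by simp
      next
        assume m: "antimono h \<and> antimono g"
        then have "h (1 + a x) \<le> h (a x)" "g (1 + b x) \<le> g (b x)"
          using le antimonoD[OF conjunct1[OF m]] antimonoD[OF conjunct2[OF m]] by blast+
        then show ?thesis by (simp add: mult_nonpos_nonpos)
      qed
    qed
    finally show "(\<integral>\<^sup>+y. ennreal (h (of_bool (fst y) + a x) * g (of_bool (snd y) + b x)) \<partial>\<nu>) \<le> ennreal (H (a x) * G (b x))" .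
  qed
  also have "\<dots> \<le> (\<integral>\<^sup>+x. ennreal (H (a x)) \<partial>PiM I (\<lambda>_. \<nu>)) * (\<integral>\<^sup>+x. ennreal (G (b x)) \<partial>PiM I (\<lambda>_. \<nu>))"
    unfolding a_def b_def by (rule insert(3)[OF HG Hnn Gnn])
  finally show ?case unfolding LH LG .
qed


lemma (in prob_space) union_lb_finite:
  fixes A :: "nat \<Rightarrow> 'a set" and N :: nat
  assumes A: "\<And>j. A j \<in> events"
    and neg: "\<And>i j. i \<noteq> j \<Longrightarrow> prob (A i \<inter> A j) \<le> prob (A i) * prob (A j)"
  shows "min 1 (\<Sum>j<N. prob (A j)) \<le> 2 * prob (\<Union>j<N. A j)"
proof -
  define s where "s = (\<Sum>j<N. prob (A j))"
  define U where "U = (\<Union>j<N. A j)"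
  define C where "C x = (\<Sum>j<N. indicator (A j) x :: real)" for x
  have U: "U \<in> events" unfolding U_def using A by (intro sets.finite_UN) auto
  have s0: "0 \<le> s" unfolding s_def by (simp add: sum_nonneg)
  have sq: "C x * C x = (\<Sum>j<N. \<Sum>k<N. indicator (A j \<inter> A k) x)" for x
    unfolding C_def sum_product by (simp add: indicator_inter_arith)
  have intA: "integrable M (indicator (A j) :: _ \<Rightarrow> real)" for j
    using A by (intro integrable_real_indicator) (auto simp: less_top[symmetric])
  have intAA: "integrable M (indicator (A j \<inter> A k) :: _ \<Rightarrow> real)" for j k
    using A by (intro integrable_real_indicator) (auto simp: less_top[symmetric])
  have intC: "(\<integral>x. C x \<partial>M) = s"
    unfolding C_def s_def using A intA by (simp add: integral_sum)
  have intC2: "(\<integral>x. C x * C x \<partial>M) = (\<Sum>j<N. \<Sum>k<N. prob (A j \<inter> A k))"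
    unfolding sq using A intAA by (simp add: integral_sum integrable_sum)
  have C2le: "(\<integral>x. C x * C x \<partial>M) \<le> s + s * s"
  proof -
    have "(\<Sum>j<N. \<Sum>k<N. prob (A j \<inter> A k)) \<le> (\<Sum>j<N. \<Sum>k<N. of_bool (j = k) * prob (A j) + prob (A j) * prob (A k))"
    proof (intro sum_mono)
      fix j k
      show "prob (A j \<inter> A k) \<le> of_bool (j = k) * prob (A j) + prob (A j) * prob (A k)"
      proof (cases "j = k")
        case True then show ?thesis by (simp add: mult_nonneg_nonneg)
      next
        case False then show ?thesis using neg[OF False] by simp
      qed
    qed
    also have "\<dots> = s + s * s"
      unfolding s_def by (simp add: sum.distrib sum_product)
    finally show ?thesis unfolding intC2 .
  qed
  have pw: "l * C x - (l * C x)^2 / 4 \<le> indicator U x" for l x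
  proof (cases "x \<in> U")
    case True
    have "0 \<le> (l * C x - 2)^2" by simp
    then show ?thesis using True by (simp add: power2_eq_square algebra_simps)
  next
    case False
    then have "C x = 0" unfolding C_def U_def by (auto intro!: sum.neutral)
    then show ?thesis using False by simp
  qed
  have key: "l * s - l^2 / 4 * (s + s * s) \<le> prob U" for l
  proof -
    have intC': "integrable M C" unfolding C_def using intA by (simp add: integrable_sum)
    have intC2': "integrable M (\<lambda>x. C x * C x)" unfolding sq using intAA by (simp add: integrable_sum)
    have "l * s - l^2 / 4 * (\<integral>x. C x * C x \<partial>M) = (\<integral>x. l * C x - (l * C x)^2 / 4 \<partial>M)"
      using intC' intC2' by (simp add: intC power2_eq_square algebra_simps)
    also have "\<dots> \<le> (\<integral>x. indicator U x \<partial>M)"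
      using intC' intC2' U
      by (intro integral_mono pw) (auto simp: power2_eq_square algebra_simps less_top[symmetric] intro!: integrable_real_indicator)
    also have "\<dots> = prob U" using U by simp
    finally have "l * s - l^2 / 4 * (\<integral>x. C x * C x \<partial>M) \<le> prob U" .
    moreover have "l^2 / 4 * (\<integral>x. C x * C x \<partial>M) \<le> l^2 / 4 * (s + s * s)"
      using C2le by (intro mult_left_mono) auto
    ultimately show ?thesis by linarith
  qed
  show ?thesis
  proof (cases "s \<le> 1")
    case True
    have "s - (s + s * s) / 4 \<le> prob U" using key[of 1] by simp
    moreover have "s * s \<le> s" using True s0 by (simp add: mult_left_le)
    ultimately have "s \<le> 2 * prob U" by (simp add: field_simps)
    then show ?thesis using True unfolding s_def[symmetric] U_def[symmetric] by simp
  next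
    case False
    have "1 - (1/s)^2/4 * (s + s * s) \<le> prob U" using key[of "1/s"] False by simp
    moreover have "(1/s)^2/4 * (s + s * s) = (1/s + 1) / 4" using False
      by (simp add: power2_eq_square field_simps)
    moreover have "1/s \<le> 1" using False by simp
    ultimately have "1 - (1/s + 1) / 4 \<le> prob U" "1/s \<le> 1" by simp_all
    note this
    moreover have "\<And>(x::real) (p::real). 1 - (x + 1) / 4 \<le> p \<Longrightarrow> x \<le> 1 \<Longrightarrow> 1 \<le> 2 * p" by (simp add: field_simps)
    ultimately have "1 \<le> 2 * prob U" by blast
    then show ?thesis using False unfolding s_def[symmetric] U_def[symmetric] by simp
  qed
qed


lemma (in prob_space) union_lb:
  fixes A :: "nat \<Rightarrow> 'a set"
  assumes A: "\<And>j. A j \<in> events"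
    and neg: "\<And>i j. i \<noteq> j \<Longrightarrow> prob (A i \<inter> A j) \<le> prob (A i) * prob (A j)"
  shows "min 1 (\<Sum>j. ennreal (prob (A j))) \<le> 2 * emeasure M (\<Union>j. A j)"
proof -
  have UN: "(\<Union>j. A j) \<in> events" using A by auto
  have fin: "min 1 (ennreal (\<Sum>j<N. prob (A j))) \<le> 2 * emeasure M (\<Union>j. A j)" for N
  proof -
    have "min 1 (ennreal (\<Sum>j<N. prob (A j))) = ennreal (min 1 (\<Sum>j<N. prob (A j)))"
      by (cases "(\<Sum>j<N. prob (A j)) \<le> 1") (auto simp: min_def)
    also have "\<dots> \<le> ennreal (2 * prob (\<Union>j<N. A j))"
      by (intro ennreal_leI union_lb_finite A neg)
    also have "\<dots> = 2 * emeasure M (\<Union>j<N. A j)"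
      by (simp add: emeasure_eq_measure ennreal_mult)
    also have "\<dots> \<le> 2 * emeasure M (\<Union>j. A j)"
      by (intro mult_left_mono emeasure_mono UN) auto
    finally show ?thesis .
  qed
  have ps: "(\<Sum>j<N. ennreal (prob (A j))) = ennreal (\<Sum>j<N. prob (A j))" for N
    by (simp add: sum_ennreal)
  show ?thesis
  proof (cases "\<exists>N. 1 \<le> ennreal (\<Sum>j<N. prob (A j))")
    case True
    then obtain N where N: "1 \<le> ennreal (\<Sum>j<N. prob (A j))" by blast
    have "min 1 (\<Sum>j. ennreal (prob (A j))) \<le> 1" by simp
    also have "\<dots> = min 1 (ennreal (\<Sum>j<N. prob (A j)))" using N by simp
    also have "\<dots> \<le> 2 * emeasure M (\<Union>j. A j)" by (rule fin)
    finally show ?thesis .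
  next
    case False
    have "min 1 (\<Sum>j. ennreal (prob (A j))) \<le> (\<Sum>j. ennreal (prob (A j)))" by simp
    also have "\<dots> = (SUP N. \<Sum>j<N. ennreal (prob (A j)))" by (rule suminf_eq_SUP)
    also have "\<dots> \<le> 2 * emeasure M (\<Union>j. A j)"
    proof (rule SUP_least)
      fix N
      have "(\<Sum>j<N. ennreal (prob (A j))) = min 1 (ennreal (\<Sum>j<N. prob (A j)))"
        using False by (simp add: ps min_def)
      also have "\<dots> \<le> 2 * emeasure M (\<Union>j. A j)" by (rule fin)
      finally show "(\<Sum>j<N. ennreal (prob (A j))) \<le> 2 * emeasure M (\<Union>j. A j)" .
    qed
    finally show ?thesis .
  qed
qed


lemma layer:
  fixes Z :: "'a \<Rightarrow> real"
  assumes sf: "sigma_finite_measure M" and Zm[measurable]: "Z \<in> borel_measurable M" and Z0: "\<And>x. 0 \<le> Z x"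
  shows "(\<integral>\<^sup>+x. ennreal (Z x) \<partial>M) = (\<integral>\<^sup>+t. (\<integral>\<^sup>+x. (if 0 < t \<and> t < Z x then 1 else 0 :: ennreal) \<partial>M) \<partial>lborel)"
proof -
  interpret pair_sigma_finite M lborel
    using sf by (simp add: pair_sigma_finite_def lborel.sigma_finite_measure_axioms)
  have "(\<integral>\<^sup>+x. ennreal (Z x) \<partial>M) = (\<integral>\<^sup>+x. (\<integral>\<^sup>+t. (if 0 < t \<and> t < Z x then 1 else 0 :: ennreal) \<partial>lborel) \<partial>M)"
  proof (intro nn_integral_cong)
    fix x
    have "(\<integral>\<^sup>+t. (if 0 < t \<and> t < Z x then 1 else 0 :: ennreal) \<partial>lborel) = (\<integral>\<^sup>+t. indicator {0<..<Z x} t \<partial>lborel)"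
      by (intro nn_integral_cong) (auto simp: indicator_def)
    also have "\<dots> = ennreal (Z x)" using Z0[of x] by simp
    finally show "ennreal (Z x) = (\<integral>\<^sup>+t. (if 0 < t \<and> t < Z x then 1 else 0 :: ennreal) \<partial>lborel)" by simp
  qed
  also have "\<dots> = (\<integral>\<^sup>+t. (\<integral>\<^sup>+x. (if 0 < t \<and> t < Z x then 1 else 0 :: ennreal) \<partial>M) \<partial>lborel)"
    by (rule Fubini'[symmetric]) measurable
  finally show ?thesis .
qed

lemma layer_compare:
  fixes Z1 :: "'a \<Rightarrow> real" and Z2 :: "'b \<Rightarrow> real"
  assumes P1: "prob_space M1" and P2: "prob_space M2"
    and m1[measurable]: "Z1 \<in> borel_measurable M1" and m2[measurable]: "Z2 \<in> borel_measurable M2"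
    and n1: "\<And>x. 0 \<le> Z1 x" and n2: "\<And>x. 0 \<le> Z2 x"
    and cmp: "\<And>t. 0 < t \<Longrightarrow> emeasure M2 {x\<in>space M2. t < Z2 x} \<le> 2 * emeasure M1 {x\<in>space M1. t < Z1 x}"
  shows "(\<integral>\<^sup>+x. ennreal (Z2 x) \<partial>M2) \<le> 2 * (\<integral>\<^sup>+x. ennreal (Z1 x) \<partial>M1)"
proof -
  interpret P1: prob_space M1 by fact
  interpret P2: prob_space M2 by fact
  have inner: "(\<integral>\<^sup>+x. (if 0 < t \<and> t < Z x then 1 else 0 :: ennreal) \<partial>M) = (if 0 < t then emeasure M {x\<in>space M. t < Z x} else 0)"
    if "Z \<in> borel_measurable M" for M and Z :: "'c \<Rightarrow> real" and t
  proof -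
    have "(\<integral>\<^sup>+x. (if 0 < t \<and> t < Z x then 1 else 0 :: ennreal) \<partial>M) = (\<integral>\<^sup>+x. (if 0 < t then indicator {x\<in>space M. t < Z x} x else 0) \<partial>M)"
      by (intro nn_integral_cong) (auto simp: indicator_def)
    also have "\<dots> = (if 0 < t then emeasure M {x\<in>space M. t < Z x} else 0)"
      using that by (cases "0 < t") auto
    finally show ?thesis .
  qed
  have meas1: "(\<lambda>t. \<integral>\<^sup>+x. (if 0 < t \<and> t < Z1 x then 1 else 0 :: ennreal) \<partial>M1) \<in> borel_measurable lborel"
    by measurable
  have "(\<integral>\<^sup>+x. ennreal (Z2 x) \<partial>M2) = (\<integral>\<^sup>+t. (\<integral>\<^sup>+x. (if 0 < t \<and> t < Z2 x then 1 else 0 :: ennreal) \<partial>M2) \<partial>lborel)"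
    by (rule layer[OF P2.sigma_finite_measure_axioms m2 n2])
  also have "\<dots> \<le> (\<integral>\<^sup>+t. 2 * (\<integral>\<^sup>+x. (if 0 < t \<and> t < Z1 x then 1 else 0 :: ennreal) \<partial>M1) \<partial>lborel)"
    by (intro nn_integral_mono) (auto simp: inner[OF m1] inner[OF m2] cmp)
  also have "\<dots> = 2 * (\<integral>\<^sup>+t. (\<integral>\<^sup>+x. (if 0 < t \<and> t < Z1 x then 1 else 0 :: ennreal) \<partial>M1) \<partial>lborel)"
    by (rule nn_integral_cmult[OF meas1])
  also have "\<dots> = 2 * (\<integral>\<^sup>+x. ennreal (Z1 x) \<partial>M1)"
    by (subst layer[OF P1.sigma_finite_measure_axioms m1 n1]) simp
  finally show ?thesis .
qed


lemma meas_count_any: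
  assumes "sets \<nu> = sets (count_space UNIV)"
  shows "(f :: 'c \<Rightarrow> real) \<in> borel_measurable \<nu>"
  using assms by (simp add: measurable_cong_sets[OF assms refl])

lemma borel_monoanti:
  fixes h :: "real \<Rightarrow> real"
  assumes h: "mono h \<or> antimono h"
  shows "h \<in> borel_measurable borel"
proof (cases "mono h")
  case True then show ?thesis by (rule borel_measurable_mono)
next
  case False
  then have "mono (\<lambda>x. - h x)" using h by (auto simp: mono_def antimono_def)
  then have "(\<lambda>x. - h x) \<in> borel_measurable borel" by (rule borel_measurable_mono)
  then have "(\<lambda>x. - (- h x)) \<in> borel_measurable borel" by (rule borel_measurable_uminus)
  then show ?thesis by simp
qed

lemma meas_sum_gen:
  fixes \<nu> :: "'c measure" and f :: "'c \<Rightarrow> real" and h :: "real \<Rightarrow> real"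
  assumes S: "sets \<nu> = sets (count_space UNIV)" and h: "mono h \<or> antimono h"
  shows "(\<lambda>\<omega>. ennreal (h (\<Sum>k\<in>I. f (\<omega> k)))) \<in> borel_measurable (PiM I (\<lambda>_. \<nu>))"
proof -
  have [measurable]: "(\<lambda>\<omega>. (\<Sum>k\<in>I. f (\<omega> k))) \<in> borel_measurable (PiM I (\<lambda>_. \<nu>))"
  proof (intro borel_measurable_sum)
    fix k assume "k \<in> I"
    then show "(\<lambda>\<omega>. f (\<omega> k)) \<in> borel_measurable (PiM I (\<lambda>_. \<nu>))"
      using measurable_compose[OF measurable_component_singleton[of k I "\<lambda>_. \<nu>"] meas_count_any[OF S, of f]] by blast
  qed
  have [measurable]: "h \<in> borel_measurable borel" by (rule borel_monoanti[OF h])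
  show ?thesis by measurable
qed

lemma meas_sum_gen2:
  fixes \<nu> :: "'c measure" and f f' :: "'c \<Rightarrow> real" and h g :: "real \<Rightarrow> real"
  assumes S: "sets \<nu> = sets (count_space UNIV)" and h: "mono h \<or> antimono h" and g: "mono g \<or> antimono g"
  shows "(\<lambda>\<omega>. ennreal (h (\<Sum>k\<in>I. f (\<omega> k)) * g (\<Sum>k\<in>I. f' (\<omega> k)))) \<in> borel_measurable (PiM I (\<lambda>_. \<nu>))"
proof -
  have [measurable]: "(\<lambda>\<omega>. (\<Sum>k\<in>I. f (\<omega> k))) \<in> borel_measurable (PiM I (\<lambda>_. \<nu>))"
    "(\<lambda>\<omega>. (\<Sum>k\<in>I. f' (\<omega> k))) \<in> borel_measurable (PiM I (\<lambda>_. \<nu>))"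
    by (intro borel_measurable_sum; rule measurable_compose[OF measurable_component_singleton[of _ I "\<lambda>_. \<nu>"] meas_count_any[OF S]], assumption)+
  have [measurable]: "h \<in> borel_measurable borel" "g \<in> borel_measurable borel"
    by (rule borel_monoanti[OF h], rule borel_monoanti[OF g])
  show ?thesis by measurable
qed

lemma cube_comp:
  assumes "sets \<rho> = sets cube"
  shows "(\<lambda>x. x j) \<in> measurable \<rho> (count_space UNIV)"
  unfolding measurable_cong_sets[OF assms refl] cube_def
  by (rule measurable_component_singleton) simp

lemma cube_pair:
  assumes "sets \<rho> = sets cube"
  shows "(\<lambda>x. (x a, x b)) \<in> measurable \<rho> (count_space UNIV)"
proof -
  have "count_space (UNIV :: (bool \<times> bool) set) = count_space UNIV \<Otimes>\<^sub>M count_space UNIV"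
    by (subst pair_measure_countable) auto
  then show ?thesis
    using cube_comp[OF assms] by (simp add: measurable_Pair)
qed

lemma transfer_lem:
  fixes \<rho> :: "'a measure" and \<phi> :: "'a \<Rightarrow> 'c" and F :: "('i \<Rightarrow> 'c) \<Rightarrow> ennreal"
  assumes P: "prob_space \<rho>" and m: "\<phi> \<in> measurable \<rho> (count_space UNIV)" and fin: "finite I"
    and Fm: "F \<in> borel_measurable (PiM I (\<lambda>_. distr \<rho> (count_space UNIV) \<phi>))"
  shows "(\<integral>\<^sup>+\<omega>. F \<omega> \<partial>PiM I (\<lambda>_. distr \<rho> (count_space UNIV) \<phi>)) = (\<integral>\<^sup>+xs. F (\<lambda>i\<in>I. \<phi> (xs i)) \<partial>PiM I (\<lambda>_. \<rho>))"
proof -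
  interpret prob_space \<rho> by fact
  let ?\<nu> = "distr \<rho> (count_space UNIV) \<phi>"
  have p\<nu>: "prob_space ?\<nu>" using m by (rule prob_space_distr)
  have m\<phi>: "\<phi> \<in> measurable \<rho> ?\<nu>"
    using m by (simp add: measurable_cong_sets[OF refl sets_distr])
  have "distr (PiM I (\<lambda>_. \<rho>)) (PiM I (\<lambda>_. ?\<nu>)) (compose I \<phi>) = PiM I (\<lambda>_. distr \<rho> ?\<nu> \<phi>)"
    by (rule distr_PiM_finite_prob_space') (use fin P p\<nu> m\<phi> in auto)
  also have "distr \<rho> ?\<nu> \<phi> = ?\<nu>" by (rule distr_cong) auto
  finally have eq: "distr (PiM I (\<lambda>_. \<rho>)) (PiM I (\<lambda>_. ?\<nu>)) (compose I \<phi>) = PiM I (\<lambda>_. ?\<nu>)" .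
  have mc: "compose I \<phi> \<in> measurable (PiM I (\<lambda>_. \<rho>)) (PiM I (\<lambda>_. ?\<nu>))"
    unfolding compose_def
  proof (intro measurable_restrict)
    fix i assume "i \<in> I"
    then show "(\<lambda>x. \<phi> (x i)) \<in> measurable (PiM I (\<lambda>_. \<rho>)) ?\<nu>"
      by (rule measurable_compose[OF measurable_component_singleton[of i I "\<lambda>_. \<rho>"] m\<phi>])
  qed
  have "(\<integral>\<^sup>+\<omega>. F \<omega> \<partial>PiM I (\<lambda>_. ?\<nu>)) = (\<integral>\<^sup>+\<omega>. F \<omega> \<partial>distr (PiM I (\<lambda>_. \<rho>)) (PiM I (\<lambda>_. ?\<nu>)) (compose I \<phi>))"
    by (simp add: eq)
  also have "\<dots> = (\<integral>\<^sup>+xs. F (compose I \<phi> xs) \<partial>PiM I (\<lambda>_. \<rho>))"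
    by (rule nn_integral_distr[OF mc]) (simp add: eq Fm)
  finally show ?thesis by (simp add: compose_def)
qed


lemma marg:
  fixes \<rho> :: "(nat \<Rightarrow> bool) measure" and h :: "real \<Rightarrow> real" and n :: nat
  assumes P: "prob_space \<rho>" and S: "sets \<rho> = sets cube" and h: "mono h \<or> antimono h"
  shows "(\<integral>\<^sup>+xs. ennreal (h (\<Sum>i<n. of_bool (xs i j))) \<partial>PiM {..<n} (\<lambda>_. \<rho>))
       = (\<integral>\<^sup>+\<omega>. ennreal (h (\<Sum>i<n. of_bool (\<omega> i))) \<partial>PiM {..<n} (\<lambda>_. distr \<rho> (count_space UNIV) (\<lambda>x. x j)))"
proof -
  have mF: "(\<lambda>\<omega>. ennreal (h (\<Sum>i<n. of_bool (\<omega> i)))) \<in> borel_measurable (PiM {..<n} (\<lambda>_. distr \<rho> (count_space UNIV) (\<lambda>x. x j)))"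
    by (rule meas_sum_gen[OF _ h]) simp
  have "(\<integral>\<^sup>+\<omega>. ennreal (h (\<Sum>i<n. of_bool (\<omega> i))) \<partial>PiM {..<n} (\<lambda>_. distr \<rho> (count_space UNIV) (\<lambda>x. x j)))
     = (\<integral>\<^sup>+xs. ennreal (h (\<Sum>i<n. of_bool ((\<lambda>i\<in>{..<n}. xs i j) i))) \<partial>PiM {..<n} (\<lambda>_. \<rho>))"
    using transfer_lem[OF P cube_comp[OF S] finite_lessThan mF] .
  also have "\<dots> = (\<integral>\<^sup>+xs. ennreal (h (\<Sum>i<n. of_bool (xs i j))) \<partial>PiM {..<n} (\<lambda>_. \<rho>))"
    by (intro nn_integral_cong arg_cong[where f="\<lambda>x. ennreal (h x)"] sum.cong) auto
  finally show ?thesis by simp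
qed

lemma NA_apply:
  fixes \<rho> :: "(nat \<Rightarrow> bool) measure" and h g :: "real \<Rightarrow> real" and n :: nat
  assumes P: "prob_space \<rho>" and S: "sets \<rho> = sets cube" and NC: "neg_correlated \<rho>" and ab: "a \<noteq> b"
    and hg: "(mono h \<and> mono g) \<or> (antimono h \<and> antimono g)"
    and h0: "\<And>x. 0 \<le> h x" and g0: "\<And>x. 0 \<le> g x"
  shows "(\<integral>\<^sup>+xs. ennreal (h (\<Sum>i<n. of_bool (xs i a)) * g (\<Sum>i<n. of_bool (xs i b))) \<partial>PiM {..<n} (\<lambda>_. \<rho>))
     \<le> (\<integral>\<^sup>+xs. ennreal (h (\<Sum>i<n. of_bool (xs i a))) \<partial>PiM {..<n} (\<lambda>_. \<rho>)) *
        (\<integral>\<^sup>+xs. ennreal (g (\<Sum>i<n. of_bool (xs i b))) \<partial>PiM {..<n} (\<lambda>_. \<rho>))"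
proof -
  interpret prob_space \<rho> by fact
  define \<nu> where "\<nu> = distr \<rho> (count_space UNIV) (\<lambda>x. (x a, x b))"
  have m: "(\<lambda>x. (x a, x b)) \<in> measurable \<rho> (count_space UNIV)" by (rule cube_pair[OF S])
  have P\<nu>: "prob_space \<nu>" unfolding \<nu>_def using m by (rule prob_space_distr)
  have S\<nu>: "sets \<nu> = sets (count_space UNIV)" unfolding \<nu>_def by simp
  have hm: "mono h \<or> antimono h" and gm: "mono g \<or> antimono g" using hg by auto
  have int\<nu>: "(\<integral>z. f z \<partial>\<nu>) = (\<integral>x. f (x a, x b) \<partial>\<rho>)" for f :: "bool \<times> bool \<Rightarrow> real"
    unfolding \<nu>_def by (rule integral_distr[OF m]) simp
  have cov: "(\<integral>z. (of_bool (fst z) * of_bool (snd z) :: real) \<partial>\<nu>) \<le> (\<integral>z. of_bool (fst z) \<partial>\<nu>) * (\<integral>z. of_bool (snd z) \<partial>\<nu>)"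
    using NC ab unfolding int\<nu> neg_correlated_def coord_mean_def by simp
  have tr: "(\<integral>\<^sup>+\<omega>. F \<omega> \<partial>PiM {..<n} (\<lambda>_. \<nu>)) = (\<integral>\<^sup>+xs. F (\<lambda>i\<in>{..<n}. (xs i a, xs i b)) \<partial>PiM {..<n} (\<lambda>_. \<rho>))"
    if "F \<in> borel_measurable (PiM {..<n} (\<lambda>_. \<nu>))" for F
    using transfer_lem[OF P m finite_lessThan, of F] that unfolding \<nu>_def by simp
  have e1: "(\<integral>\<^sup>+\<omega>. ennreal (h (\<Sum>k<n. of_bool (fst (\<omega> k))) * g (\<Sum>k<n. of_bool (snd (\<omega> k)))) \<partial>PiM {..<n} (\<lambda>_. \<nu>))
     = (\<integral>\<^sup>+xs. ennreal (h (\<Sum>i<n. of_bool (xs i a)) * g (\<Sum>i<n. of_bool (xs i b))) \<partial>PiM {..<n} (\<lambda>_. \<rho>))"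
    by (subst tr, rule meas_sum_gen2[OF S\<nu> hm gm])
       (intro nn_integral_cong arg_cong2[where f="\<lambda>x y. ennreal (h x * g y)"] sum.cong; simp)
  have e2: "(\<integral>\<^sup>+\<omega>. ennreal (h (\<Sum>k<n. of_bool (fst (\<omega> k)))) \<partial>PiM {..<n} (\<lambda>_. \<nu>))
     = (\<integral>\<^sup>+xs. ennreal (h (\<Sum>i<n. of_bool (xs i a))) \<partial>PiM {..<n} (\<lambda>_. \<rho>))"
    by (subst tr, rule meas_sum_gen[OF S\<nu> hm])
       (intro nn_integral_cong arg_cong[where f="\<lambda>x. ennreal (h x)"] sum.cong; simp)
  have e3: "(\<integral>\<^sup>+\<omega>. ennreal (g (\<Sum>k<n. of_bool (snd (\<omega> k)))) \<partial>PiM {..<n} (\<lambda>_. \<nu>))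
     = (\<integral>\<^sup>+xs. ennreal (g (\<Sum>i<n. of_bool (xs i b))) \<partial>PiM {..<n} (\<lambda>_. \<rho>))"
    by (subst tr, rule meas_sum_gen[OF S\<nu> gm])
       (intro nn_integral_cong arg_cong[where f="\<lambda>x. ennreal (g x)"] sum.cong; simp)
  show ?thesis
    using NA_lemma[OF P\<nu> S\<nu> cov finite_lessThan[of n] hg h0 g0] unfolding e1 e2 e3 .
qed


lemma S_meas:
  assumes S: "sets \<rho> = sets cube"
  shows "(\<lambda>xs. \<Sum>i<n. (of_bool (xs i j) :: real)) \<in> borel_measurable (PiM {..<(n::nat)} (\<lambda>_. \<rho>))"
proof (intro borel_measurable_sum)
  fix i assume i: "i \<in> {..<n}"
  have "(\<lambda>xs. xs i j) \<in> measurable (PiM {..<n} (\<lambda>_. \<rho>)) (count_space UNIV)"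
    by (rule measurable_compose[OF measurable_component_singleton[OF i] cube_comp[OF S]])
  then show "(\<lambda>xs. of_bool (xs i j) :: real) \<in> borel_measurable (PiM {..<n} (\<lambda>_. \<rho>))"
    by (rule measurable_compose) simp
qed

lemma S_bounds:
  "0 \<le> (\<Sum>i<n. (of_bool (xs i j) :: real))" "(\<Sum>i<n. (of_bool (xs i j) :: real)) \<le> real n"
proof -
  show "0 \<le> (\<Sum>i<n. (of_bool (xs i j) :: real))" by (rule sum_nonneg) simp
  have "(\<Sum>i<n. (of_bool (xs i j) :: real)) \<le> (\<Sum>i<n. 1)" by (rule sum_mono) simp
  then show "(\<Sum>i<n. (of_bool (xs i j) :: real)) \<le> real n" by simp
qed

lemma cm_bounds:
  assumes "prob_space \<rho>" "sets \<rho> = sets cube"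
  shows "0 \<le> coord_mean \<rho> j" "coord_mean \<rho> j \<le> 1"
proof -
  interpret prob_space \<rho> by fact
  have m: "(\<lambda>x. of_bool (x j) :: real) \<in> borel_measurable \<rho>"
    using cube_comp[OF assms(2)] by (rule measurable_compose) simp
  have int: "integrable \<rho> (\<lambda>x. of_bool (x j) :: real)"
    by (rule integrable_const_bound[where B=1]) (use m in auto)
  show "0 \<le> coord_mean \<rho> j" unfolding coord_mean_def by simp
  show "coord_mean \<rho> j \<le> 1" unfolding coord_mean_def
    by (rule integral_le_const[OF int]) simp
qed

lemma hh_mono:
  assumes n: "0 < n" and \<sigma>: "\<sigma> = (1::real)"
  shows "mono ((\<lambda>s. of_bool (t < \<sigma> * (s / real n - q))) :: real \<Rightarrow> real)"
proof (rule monoI)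
  fix x y :: real assume "x \<le> y"
  then have "x / real n \<le> y / real n" using n by (simp add: divide_right_mono)
  then show "(of_bool (t < \<sigma> * (x / real n - q)) :: real) \<le> of_bool (t < \<sigma> * (y / real n - q))"
    using \<sigma> by auto
qed

lemma hh_antimono:
  assumes n: "0 < n" and \<sigma>: "\<sigma> = (-1::real)"
  shows "antimono ((\<lambda>s. of_bool (t < \<sigma> * (s / real n - q))) :: real \<Rightarrow> real)"
proof (rule antimonoI)
  fix x y :: real assume "x \<le> y"
  then have "x / real n \<le> y / real n" using n by (simp add: divide_right_mono)
  then show "(of_bool (t < \<sigma> * (y / real n - q)) :: real) \<le> of_bool (t < \<sigma> * (x / real n - q))"
    using \<sigma> by auto
qed


theorem theorem1:
  fixes \<mu> :: "(nat \<Rightarrow> bool) measure" and n :: nat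
  assumes "prob_space \<mu>" and "sets \<mu> = sets cube"
    and "neg_correlated \<mu>"
    and "n \<ge> 1"
  shows "Delta n \<mu> \<ge> Delta n (product_version \<mu>) / 4"
proof -
  note P = assms(1) and S = assms(2) and NC = assms(3)
  interpret P: prob_space \<mu> by fact
  have n0: "0 < n" using assms(4) by simp
  define \<nu> where "\<nu> j = distr \<mu> (count_space UNIV) (\<lambda>x. x j)" for j
  have P\<nu>: "prob_space (\<nu> j)" for j unfolding \<nu>_def by (rule P.prob_space_distr[OF cube_comp[OF S]])
  define \<mu>' where "\<mu>' = product_version \<mu>"
  have \<mu>'_eq: "\<mu>' = PiM UNIV \<nu>" unfolding \<mu>'_def product_version_def \<nu>_def ..
  have P': "prob_space \<mu>'" unfolding \<mu>'_eq by (rule prob_space_PiM) (rule P\<nu>)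
  have S': "sets \<mu>' = sets cube" unfolding \<mu>'_eq cube_def by (rule sets_PiM_cong) (auto simp: \<nu>_def)
  have dist': "distr \<mu>' (count_space UNIV) (\<lambda>x. x j) = \<nu> j" for j
  proof -
    have "distr \<mu>' (\<nu> j) (\<lambda>x. x j) = \<nu> j" unfolding \<mu>'_eq by (rule distr_PiM_component) (auto intro: P\<nu>)
    moreover have "distr \<mu>' (count_space UNIV) (\<lambda>x. x j) = distr \<mu>' (\<nu> j) (\<lambda>x. x j)"
      by (rule distr_cong) (auto simp: \<nu>_def)
    ultimately show ?thesis by simp
  qed
  have cmd: "coord_mean \<rho> j = (\<integral>b. of_bool b \<partial>distr \<rho> (count_space UNIV) (\<lambda>x. x j))" if "sets \<rho> = sets cube" for \<rho> j
    unfolding coord_mean_def by (rule integral_distr[symmetric, OF cube_comp[OF that]]) simp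
  have cm: "coord_mean \<mu>' = coord_mean \<mu>"
    by (rule ext) (simp add: cmd[OF S] cmd[OF S'] dist' \<nu>_def)
  define p where "p = coord_mean \<mu>"
  have p01: "0 \<le> p j" "p j \<le> 1" for j unfolding p_def using cm_bounds[OF P S] by auto
  define M where "M = PiM {..<n} (\<lambda>_. \<mu>)"
  define M' where "M' = PiM {..<n} (\<lambda>_. \<mu>')"
  have PM: "prob_space M" unfolding M_def by (rule prob_space_PiM) (rule P)
  have PM': "prob_space M'" unfolding M'_def by (rule prob_space_PiM) (rule P')
  define Y where "Y j xs = (\<Sum>i<n. (of_bool (xs i j) :: real)) / real n - p j" for j and xs :: "nat \<Rightarrow> nat \<Rightarrow> bool"
  have Ybd: "\<bar>Y j xs\<bar> \<le> 1" for j xs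
  proof -
    have "0 \<le> (\<Sum>i<n. (of_bool (xs i j) :: real)) / real n" using S_bounds(1)[of xs j n] by simp
    moreover have "(\<Sum>i<n. (of_bool (xs i j) :: real)) / real n \<le> 1" using S_bounds(2)[of xs j n] n0 by simp
    ultimately show ?thesis unfolding Y_def using p01[of j] by linarith
  qed
  define Z where "Z \<sigma> xs = (SUP j. max 0 (\<sigma> * Y j xs))" for \<sigma> :: real and xs
  define D where "D xs = (SUP j. \<bar>Y j xs\<bar>)" for xs
  have Zt_bd: "max 0 (\<sigma> * Y j xs) \<le> 1" if "\<sigma> = 1 \<or> \<sigma> = -1" for \<sigma> j xs
    using that Ybd[of j xs] by auto
  have bddZ: "bdd_above (range (\<lambda>j. max 0 (\<sigma> * Y j xs)))" if "\<sigma> = 1 \<or> \<sigma> = -1" for \<sigma> xs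
    using Zt_bd[OF that] by (intro bdd_aboveI[where M=1]) auto
  have bddD: "bdd_above (range (\<lambda>j. \<bar>Y j xs\<bar>))" for xs
    using Ybd by (intro bdd_aboveI[where M=1]) auto
  have Z0: "0 \<le> Z \<sigma> xs" if "\<sigma> = 1 \<or> \<sigma> = -1" for \<sigma> xs
    unfolding Z_def using bddZ[OF that] by (rule cSUP_upper2[where x=0]) auto
  have Z1: "Z \<sigma> xs \<le> 1" if "\<sigma> = 1 \<or> \<sigma> = -1" for \<sigma> xs
    unfolding Z_def using Zt_bd[OF that] by (intro cSUP_least) auto
  have D0: "0 \<le> D xs" for xs
    unfolding D_def using bddD by (rule cSUP_upper2[where x=0]) auto
  have D1: "D xs \<le> 1" for xs
    unfolding D_def using Ybd by (intro cSUP_least) auto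
  have DZ: "D xs \<le> Z 1 xs + Z (-1) xs" for xs
    unfolding D_def
  proof (intro cSUP_least)
    fix j
    have "max 0 (1 * Y j xs) \<le> Z 1 xs" unfolding Z_def using bddZ[of 1 xs] by (intro cSUP_upper) auto
    moreover have "max 0 (-1 * Y j xs) \<le> Z (-1) xs" unfolding Z_def using bddZ[of "-1" xs] by (intro cSUP_upper) auto
    ultimately show "\<bar>Y j xs\<bar> \<le> Z 1 xs + Z (-1) xs" by (auto simp: abs_if max_def split: if_splits)
  qed simp
  have ZD: "Z \<sigma> xs \<le> D xs" if "\<sigma> = 1 \<or> \<sigma> = -1" for \<sigma> xs
    unfolding Z_def
  proof (intro cSUP_least)
    fix j
    have "\<bar>Y j xs\<bar> \<le> D xs" unfolding D_def using bddD[of xs] by (intro cSUP_upper) auto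
    then show "max 0 (\<sigma> * Y j xs) \<le> D xs" using that D0[of xs] by auto
  qed simp
  have mY[measurable]: "Y j \<in> borel_measurable (PiM {..<n} (\<lambda>_. \<rho>))" if "sets \<rho> = sets cube" for \<rho> j
    unfolding Y_def by (intro borel_measurable_diff borel_measurable_divide S_meas[OF that] borel_measurable_const)
  have mZ: "Z \<sigma> \<in> borel_measurable (PiM {..<n} (\<lambda>_. \<rho>))" if "sets \<rho> = sets cube" "\<sigma> = 1 \<or> \<sigma> = -1" for \<rho> \<sigma>
    unfolding Z_def[abs_def] by (rule borel_measurable_cSUP) (use that bddZ in auto)
  have mD: "D \<in> borel_measurable (PiM {..<n} (\<lambda>_. \<rho>))" if "sets \<rho> = sets cube" for \<rho>
    unfolding D_def[abs_def] by (rule borel_measurable_cSUP) (use that bddD in auto)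
  have intZ: "integrable (PiM {..<n} (\<lambda>_. \<rho>)) (Z \<sigma>)" if "prob_space \<rho>" "sets \<rho> = sets cube" "\<sigma> = 1 \<or> \<sigma> = -1" for \<rho> \<sigma>
  proof -
    interpret prob_space "PiM {..<n} (\<lambda>_. \<rho>)" by (rule prob_space_PiM) (use that in auto)
    show ?thesis by (rule integrable_const_bound[where B=1]) (use mZ[OF that(2,3)] Z0[OF that(3)] Z1[OF that(3)] in auto)
  qed
  have intD: "integrable (PiM {..<n} (\<lambda>_. \<rho>)) D" if "prob_space \<rho>" "sets \<rho> = sets cube" for \<rho>
  proof -
    interpret prob_space "PiM {..<n} (\<lambda>_. \<rho>)" by (rule prob_space_PiM) (use that in auto)
    show ?thesis by (rule integrable_const_bound[where B=1]) (use mD[OF that(2)] D0 D1 in auto)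
  qed
  have key: "(\<integral>xs. Z \<sigma> xs \<partial>M') \<le> 2 * (\<integral>xs. Z \<sigma> xs \<partial>M)" if h\<sigma>: "\<sigma> = 1 \<or> \<sigma> = -1" for \<sigma>
  proof -
    have cmp: "emeasure M' {x\<in>space M'. t < Z \<sigma> x} \<le> 2 * emeasure M {x\<in>space M. t < Z \<sigma> x}" if t0: "0 < t" for t
    proof -
      define A where "A N j = {xs \<in> space N. t < \<sigma> * Y j xs}" for N :: "(nat \<Rightarrow> nat \<Rightarrow> bool) measure" and j
      define h where "h j s = (of_bool (t < \<sigma> * (s / real n - p j)) :: real)" for j s
      have hm: "(mono (h i) \<and> mono (h j)) \<or> (antimono (h i) \<and> antimono (h j))" for i j
        using h\<sigma> hh_mono[OF n0, of \<sigma> t] hh_antimono[OF n0, of \<sigma> t] unfolding h_def by blast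
      have hm1: "mono (h j) \<or> antimono (h j)" for j using hm[of j j] by blast
      have h0: "0 \<le> h j s" for j s unfolding h_def by simp
      have Zset: "{xs\<in>space N. t < Z \<sigma> xs} = (\<Union>j. A N j)" for N
        unfolding A_def Z_def using t0 by (auto simp: less_cSUP_iff[OF _ bddZ[OF h\<sigma>]] less_max_iff_disj)
      have Asets: "A (PiM {..<n} (\<lambda>_. \<rho>)) j \<in> sets (PiM {..<n} (\<lambda>_. \<rho>))" if "sets \<rho> = sets cube" for \<rho> j
        unfolding A_def using mY[OF that, of j] by measurable
      have Aint: "emeasure (PiM {..<n} (\<lambda>_. \<rho>)) (A (PiM {..<n} (\<lambda>_. \<rho>)) j)
          = (\<integral>\<^sup>+xs. ennreal (h j (\<Sum>i<n. of_bool (xs i j))) \<partial>PiM {..<n} (\<lambda>_. \<rho>))" if "sets \<rho> = sets cube" for \<rho> j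
      proof -
        have "emeasure (PiM {..<n} (\<lambda>_. \<rho>)) (A (PiM {..<n} (\<lambda>_. \<rho>)) j)
            = (\<integral>\<^sup>+xs. indicator (A (PiM {..<n} (\<lambda>_. \<rho>)) j) xs \<partial>PiM {..<n} (\<lambda>_. \<rho>))"
          using Asets[OF that] by simp
        also have "\<dots> = (\<integral>\<^sup>+xs. ennreal (h j (\<Sum>i<n. of_bool (xs i j))) \<partial>PiM {..<n} (\<lambda>_. \<rho>))"
          by (intro nn_integral_cong) (simp add: A_def indicator_def h_def Y_def)
        finally show ?thesis .
      qed
      have Aint2: "emeasure M (A M i \<inter> A M j)
          = (\<integral>\<^sup>+xs. ennreal (h i (\<Sum>k<n. of_bool (xs k i)) * h j (\<Sum>k<n. of_bool (xs k j))) \<partial>M)" for i j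
      proof -
        have "A M i \<inter> A M j \<in> sets M" using Asets[OF S] unfolding M_def by blast
        then have "emeasure M (A M i \<inter> A M j) = (\<integral>\<^sup>+xs. indicator (A M i \<inter> A M j) xs \<partial>M)"
          by simp
        also have "\<dots> = (\<integral>\<^sup>+xs. ennreal (h i (\<Sum>k<n. of_bool (xs k i)) * h j (\<Sum>k<n. of_bool (xs k j))) \<partial>M)"
          by (intro nn_integral_cong) (simp add: A_def indicator_def h_def Y_def)
        finally show ?thesis .
      qed
      have AM': "emeasure M' (A M' j) = emeasure M (A M j)" for j
        unfolding M_def M'_def Aint[OF S] Aint[OF S'] marg[OF P S hm1] marg[OF P' S' hm1] dist' \<nu>_def ..
      have neg: "measure M (A M i \<inter> A M j) \<le> measure M (A M i) * measure M (A M j)" if "i \<noteq> j" for i j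
      proof -
        interpret PM: prob_space M by (rule PM)
        have "emeasure M (A M i \<inter> A M j) \<le> emeasure M (A M i) * emeasure M (A M j)"
          unfolding Aint2 unfolding M_def Aint[OF S] by (rule NA_apply[OF P S NC that hm h0 h0])
        then have "ennreal (measure M (A M i \<inter> A M j)) \<le> ennreal (measure M (A M i) * measure M (A M j))"
          by (simp add: PM.emeasure_eq_measure ennreal_mult)
        then show ?thesis by (simp add: ennreal_le_iff)
      qed
      have AsM: "range (A M) \<subseteq> sets M" using Asets[OF S] unfolding M_def by blast
      have AsM': "range (A M') \<subseteq> sets M'" using Asets[OF S'] unfolding M'_def by blast
      have "emeasure M' {x\<in>space M'. t < Z \<sigma> x} = emeasure M' (\<Union>j. A M' j)" by (simp add: Zset)
      also have "\<dots> \<le> min 1 (\<Sum>j. emeasure M' (A M' j))"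
        using emeasure_subadditive_countably[OF AsM'] prob_space.emeasure_le_1[OF PM'] by simp
      also have "\<dots> = min 1 (\<Sum>j. ennreal (measure M (A M j)))"
        by (simp add: AM' finite_measure.emeasure_eq_measure[OF prob_space.finite_measure[OF PM]])
      also have "\<dots> \<le> 2 * emeasure M (\<Union>j. A M j)"
        by (rule prob_space.union_lb[OF PM]) (use AsM neg in auto)
      also have "\<dots> = 2 * emeasure M {x\<in>space M. t < Z \<sigma> x}" by (simp add: Zset)
      finally show ?thesis .
    qed
    have "(\<integral>\<^sup>+x. ennreal (Z \<sigma> x) \<partial>M') \<le> 2 * (\<integral>\<^sup>+x. ennreal (Z \<sigma> x) \<partial>M)"
      by (rule layer_compare[OF PM PM' _ _ _ _ cmp]) (use mZ[OF S h\<sigma>] mZ[OF S' h\<sigma>] Z0[OF h\<sigma>] in \<open>auto simp: M_def M'_def\<close>)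
    then have "ennreal (\<integral>x. Z \<sigma> x \<partial>M') \<le> ennreal (2 * (\<integral>x. Z \<sigma> x \<partial>M))"
      using intZ[OF P S h\<sigma>] intZ[OF P' S' h\<sigma>] Z0[OF h\<sigma>]
      by (simp add: nn_integral_eq_integral M_def M'_def ennreal_mult)
    moreover have "0 \<le> 2 * (\<integral>x. Z \<sigma> x \<partial>M)" using Z0[OF h\<sigma>] by simp
    ultimately show ?thesis by (simp add: ennreal_le_iff)
  qed
  have "Delta n \<mu>' = (\<integral>xs. D xs \<partial>M')"
    unfolding Delta_def D_def Y_def p_def M'_def cm ..
  also have "\<dots> \<le> (\<integral>xs. Z 1 xs + Z (-1) xs \<partial>M')"
    using intD[OF P' S'] intZ[OF P' S'] DZ unfolding M'_def by (intro integral_mono) auto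
  also have "\<dots> = (\<integral>xs. Z 1 xs \<partial>M') + (\<integral>xs. Z (-1) xs \<partial>M')"
    using intZ[OF P' S'] unfolding M'_def by (intro Bochner_Integration.integral_add) auto
  also have "\<dots> \<le> 2 * (\<integral>xs. Z 1 xs \<partial>M) + 2 * (\<integral>xs. Z (-1) xs \<partial>M)"
    using key[of 1] key[of "-1"] by simp
  also have "\<dots> \<le> 2 * (\<integral>xs. D xs \<partial>M) + 2 * (\<integral>xs. D xs \<partial>M)"
  proof -
    have "(\<integral>xs. Z \<sigma> xs \<partial>M) \<le> (\<integral>xs. D xs \<partial>M)" if "\<sigma> = 1 \<or> \<sigma> = -1" for \<sigma>
      using intD[OF P S] intZ[OF P S that] ZD[OF that] unfolding M_def by (intro integral_mono) auto
    from this[of 1] this[of "-1"] show ?thesis by simp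
  qed
  also have "(\<integral>xs. D xs \<partial>M) = Delta n \<mu>"
    unfolding Delta_def D_def Y_def p_def M_def ..
  finally show ?thesis unfolding \<mu>'_def by simp
qed

end
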